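(* Let $C$ be a free $E$-linear code of length $2n$ and let $G$ be a generator matrix (over $\mathbb{F}_2$) of the binary code $SHull(C_{Res})=C_{Res}\cap (C_{Res})^{\perp_S}$. Then $\kappa G$ is a generator matrix of $SHull(C)$.
   Context: $E=\langle \kappa,\tau \mid 2\kappa=2\tau=0,\ \kappa^2=\kappa,\ \tau^2=\tau,\ \kappa\tau=\kappa,\ \tau\kappa=\tau\rangle$ is the non-unital ring $\{0,\kappa,\tau,\zeta\}$, $\zeta=\kappa+\tau$, with $e\kappa=e\tau=e$, $e\zeta=0$ for all $e\in E$. Every $e\in E$ is uniquely $u\kappa+v\zeta$ ($u,v\in\mathbb{F}_2$); $\pi(u\kappa+v\zeta)=u$, applied componentwise. For $v\in\mathbb{F}_2^m$, $e\in E$: $ev=(ev_1,\dots,ev_m)$ with $0\cdot e=0,1\cdot e=e$; for a binary matrix $G$, $\kappa G$ is the matrix obtained by multiplying each entry by $\kappa$ in this sense. An $E$-linear code of length $2n$ is a left $E$-submodule $C\subseteq E^{2n}$; $C_{Res}=\pi(C)$, $C_{Tor}=\{v\in\mathbb{F}_2^{2n}:\zeta v\in C\}$; $C$ is free if $C_{Res}=C_{Tor}$. Symplectic inner product: for $x=(u|v),y=(u'|v')$ (each half of length $n$, over $E$ or $\mathbb{F}_2$), $\langle x,y\rangle_s=\sum_i u_iv'_i+\sum_i v_iu'_i$. For binary $B$, $B^{\perp_S}=\{z:\langle z,w\rangle_s=0\ \forall w\in B\}$. For $E$-linear $C$: $C^{\perp_{S_L}}=\{z\in E^{2n}:\langle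 z,w\rangle_s=0\ \forall w\in C\}$, $C^{\perp_{S_R}}=\{z\in E^{2n}:\langle w,z\rangle_s=0\ \forall w\in C\}$, $C^{\perp_S}=C^{\perp_{S_L}}\cap C^{\perp_{S_R}}$, $SHull(C)=C\cap C^{\perp_S}$. For $X=\{x_1,\dots,x_k\}\subseteq E^{2n}$, $\langle X\rangle_E=\{\sum e_jx_j: e_j\in E\}$ and $\langle X\rangle_{\mathbb{F}_2}=\{\sum u_jx_j:u_j\in\mathbb{F}_2\}$; $X$ generates $C$ if $C=\langle X\rangle_E\cup\langle X\rangle_{\mathbb{F}_2}$, and a matrix whose rows form a generating set of $C$ is a generator matrix of $C$. *)

theory Defs
  imports Main "HOL-Library.Z2"
begin

datatype E = E0 | Kap | Tau | Zet

fun eplus :: "E \<Rightarrow> E \<Rightarrow> E" where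
  "eplus E0 y = y"
| "eplus x E0 = x"
| "eplus Kap Kap = E0"
| "eplus Tau Tau = E0"
| "eplus Zet Zet = E0"
| "eplus Kap Tau = Zet"
| "eplus Tau Kap = Zet"
| "eplus Kap Zet = Tau"
| "eplus Zet Kap = Tau"
| "eplus Tau Zet = Kap"
| "eplus Zet Tau = Kap"

fun etimes :: "E \<Rightarrow> E \<Rightarrow> E" where
  "etimes x Kap = x"
| "etimes x Tau = x"
| "etimes x E0 = E0"
| "etimes x Zet = E0"

instantiation E :: comm_monoid_add
begin
definition zero_E :: E where "zero_E = E0"
definition plus_E :: "E \<Rightarrow> E \<Rightarrow> E" where "plus_E = eplus"
instance
proof
  fix a b c :: E
  show "a + b + c = a + (b + c)"
    by (cases a; cases b; cases c; simp add: plus_E_def)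
  show "a + b = b + a"
    by (cases a; cases b; simp add: plus_E_def)
  show "0 + a = a"
    by (cases a; simp add: plus_E_def zero_E_def)
qed
end

instantiation E :: times
begin
definition times_E :: "E \<Rightarrow> E \<Rightarrow> E" where "times_E = etimes"
instance ..
end

text \<open>pi(u kappa + v zeta) = u.\<close>
fun piE :: "E \<Rightarrow> bit" where
  "piE E0 = 0"
| "piE Kap = 1"
| "piE Tau = 1"
| "piE Zet = 0"

definition bsc :: "bit \<Rightarrow> E \<Rightarrow> E" where
  "bsc b e = (if b = 1 then e else 0)"

definition E_linear_code :: "nat \<Rightarrow> E list set \<Rightarrow> bool" where
  "E_linear_code n C \<longleftrightarrow>
     C \<subseteq> {x. length x = 2 * n} \<and>
     replicate (2 * n) 0 \<in> C \<and>
     (\<forall>x\<in>C. \<forall>y\<in>C. map2 (+) x y \<in> C) \<and>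
     (\<forall>e x. x \<in> C \<longrightarrow> map (\<lambda>a. e * a) x \<in> C)"

definition C_Res :: "E list set \<Rightarrow> bit list set" where
  "C_Res C = map piE ` C"

definition C_Tor :: "nat \<Rightarrow> E list set \<Rightarrow> bit list set" where
  "C_Tor n C = {v. length v = 2 * n \<and> map (\<lambda>b. bsc b Zet) v \<in> C}"

definition free_code :: "nat \<Rightarrow> E list set \<Rightarrow> bool" where
  "free_code n C \<longleftrightarrow> C_Res C = C_Tor n C"

definition symp :: "nat \<Rightarrow> 'a::{comm_monoid_add,times} list \<Rightarrow> 'a list \<Rightarrow> 'a" where
  "symp n x y = (\<Sum>i<n. x ! i * y ! (n + i)) + (\<Sum>i<n. x ! (n + i) * y ! i)"

definition perpS_bin :: "nat \<Rightarrow> bit list set \<Rightarrow> bit list set" where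
  "perpS_bin n B = {z. length z = 2 * n \<and> (\<forall>w\<in>B. symp n z w = 0)}"

definition SHull_bin :: "nat \<Rightarrow> bit list set \<Rightarrow> bit list set" where
  "SHull_bin n B = B \<inter> perpS_bin n B"

definition perpSL :: "nat \<Rightarrow> E list set \<Rightarrow> E list set" where
  "perpSL n C = {z. length z = 2 * n \<and> (\<forall>w\<in>C. symp n z w = 0)}"

definition perpSR :: "nat \<Rightarrow> E list set \<Rightarrow> E list set" where
  "perpSR n C = {z. length z = 2 * n \<and> (\<forall>w\<in>C. symp n w z = 0)}"

definition perpS :: "nat \<Rightarrow> E list set \<Rightarrow> E list set" where
  "perpS n C = perpSL n C \<inter> perpSR n C"

definition SHull :: "nat \<Rightarrow> E list set \<Rightarrow> E list set" where
  "SHull n C = C \<inter> perpS n C"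

section \<open>Generator matrices (a matrix is the list of its rows)\<close>

definition span_bin :: "nat \<Rightarrow> bit list list \<Rightarrow> bit list set" where
  "span_bin n X = {map (\<lambda>i. \<Sum>j<length X. u j * (X ! j) ! i) [0..<2 * n] | u. True}"

definition gen_matrix_bin :: "nat \<Rightarrow> bit list list \<Rightarrow> bit list set \<Rightarrow> bool" where
  "gen_matrix_bin n G B \<longleftrightarrow> (\<forall>r\<in>set G. length r = 2 * n) \<and> B = span_bin n G"

definition span_E :: "nat \<Rightarrow> E list list \<Rightarrow> E list set" where
  "span_E n X = {map (\<lambda>i. \<Sum>j<length X. e j * (X ! j) ! i) [0..<2 * n] | e. True}"

definition span_F2 :: "nat \<Rightarrow> E list list \<Rightarrow> E list set" where
  "span_F2 n X = {map (\<lambda>i. \<Sum>j<length X. bsc (u j) ((X ! j) ! i)) [0..<2 * n] | u. True}"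

definition gen_matrix_E :: "nat \<Rightarrow> E list list \<Rightarrow> E list set \<Rightarrow> bool" where
  "gen_matrix_E n X C \<longleftrightarrow> (\<forall>r\<in>set X. length r = 2 * n) \<and> C = span_E n X \<union> span_F2 n X"

definition kappa_mat :: "bit list list \<Rightarrow> E list list" where
  "kappa_mat G = map (map (\<lambda>g. bsc g Kap)) G"

end

theory Submission
  imports Defs
begin

lemma bit_cases2: "(b::bit) = 0 \<or> b = 1"
  by (cases "b = 0") auto

fun ezE :: "E \<Rightarrow> bit" where
  "ezE E0 = 0" | "ezE Kap = 0" | "ezE Tau = 1" | "ezE Zet = 1"

definition mkE :: "bit \<Rightarrow> bit \<Rightarrow> E" where
  "mkE u v = bsc u Kap + bsc v Zet"

lemma E_simps[simp]: "(0::E) = E0" by (simp add: zero_E_def)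

lemma piE_add: "piE (a + b) = piE a + piE b"
  by (cases a; cases b; simp add: plus_E_def)
lemma ezE_add: "ezE (a + b) = ezE a + ezE b"
  by (cases a; cases b; simp add: plus_E_def)

lemma times_E_bsc: "a * b = bsc (piE b) a"
  by (cases a; cases b; simp add: times_E_def bsc_def)

lemma piE_bsc: "piE (bsc u e) = u * piE e"
  using bit_cases2[of u] by (auto simp: bsc_def)
lemma ezE_bsc: "ezE (bsc u e) = u * ezE e"
  using bit_cases2[of u] by (auto simp: bsc_def)

lemma piE_mk[simp]: "piE (mkE u v) = u"
  using bit_cases2[of u] bit_cases2[of v] by (auto simp: mkE_def bsc_def plus_E_def)
lemma ezE_mk[simp]: "ezE (mkE u v) = v"
  using bit_cases2[of u] bit_cases2[of v] by (auto simp: mkE_def bsc_def plus_E_def)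
lemma mk_pi_ez: "mkE (piE e) (ezE e) = e"
  by (cases e; simp add: mkE_def bsc_def plus_E_def)

lemma E_eq_iff: "a = b \<longleftrightarrow> piE a = piE b \<and> ezE a = ezE b"
  by (metis mk_pi_ez)

lemma E_zero_iff: "a = 0 \<longleftrightarrow> piE a = 0 \<and> ezE a = 0"
  by (cases a; simp)

lemma piE_sum: "piE (\<Sum>j<(m::nat). f j) = (\<Sum>j<m. piE (f j))"
  by (induction m) (auto simp: piE_add)
lemma ezE_sum: "ezE (\<Sum>j<(m::nat). f j) = (\<Sum>j<m. ezE (f j))"
  by (induction m) (auto simp: ezE_add)

lemma piE_times: "piE (a * b) = piE a * piE b"
  by (simp add: times_E_bsc piE_bsc mult.commute)
lemma ezE_times: "ezE (a * b) = ezE a * piE b"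
  by (simp add: times_E_bsc ezE_bsc mult.commute)

lemma piE_symp: "piE (symp n x y) = symp n (map piE x) (map piE y)"
  if "length x = 2*n" "length y = 2*n" for x y :: "E list"
proof -
  have "piE (symp n x y) = (\<Sum>i<n. piE (x ! i * y ! (n + i))) + (\<Sum>i<n. piE (x ! (n + i) * y ! i))"
    by (simp add: symp_def piE_add piE_sum)
  also have "\<dots> = symp n (map piE x) (map piE y)"
    using that by (simp add: symp_def piE_times)
  finally show ?thesis .
qed

lemma ezE_symp: "ezE (symp n x y) = symp n (map ezE x) (map piE y)"
  if "length x = 2*n" "length y = 2*n" for x y :: "E list"
proof -
  have "ezE (symp n x y) = (\<Sum>i<n. ezE (x ! i * y ! (n + i))) + (\<Sum>i<n. ezE (x ! (n + i) * y ! i))"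
    by (simp add: symp_def ezE_add ezE_sum)
  also have "\<dots> = symp n (map ezE x) (map piE y)"
    using that by (simp add: symp_def ezE_times)
  finally show ?thesis .
qed

lemma symp_E_zero: "symp n x y = 0 \<longleftrightarrow>
   symp n (map piE x) (map piE y) = 0 \<and> symp n (map ezE x) (map piE y) = 0"
  if "length x = 2*n" "length y = 2*n" for x y :: "E list"
  using that E_zero_iff[of "symp n x y"] piE_symp ezE_symp by simp

lemma symp_bin_comm: "symp n (a::bit list) b = symp n b a"
  unfolding symp_def by (simp only: mult.commute add.commute)

lemma C_char:
  assumes lin: "E_linear_code n C" and fr: "free_code n C"
  shows "x \<in> C \<longleftrightarrow> length x = 2*n \<and> map piE x \<in> C_Res C \<and> map ezE x \<in> C_Res C"
proof
  assume x: "x \<in> C"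
  have len: "length x = 2*n" using lin x unfolding E_linear_code_def by auto
  have kx: "map (\<lambda>a. Kap * a) x \<in> C" using lin x unfolding E_linear_code_def by auto
  have "map2 (+) x (map (\<lambda>a. Kap * a) x) \<in> C" using lin x kx unfolding E_linear_code_def by auto
  moreover have "map2 (+) x (map (\<lambda>a. Kap * a) x) = map (\<lambda>b. bsc b Zet) (map ezE x)"
  proof (rule nth_equalityI)
    fix i assume "i < length (map2 (+) x (map (\<lambda>a. Kap * a) x))"
    then have i: "i < length x" by simp
    show "map2 (+) x (map (\<lambda>a. Kap * a) x) ! i = map (\<lambda>b. bsc b Zet) (map ezE x) ! i"
      using i by (cases "x ! i") (simp_all add: times_E_def bsc_def plus_E_def)
  qed simp
  ultimately have "map ezE x \<in> C_Tor n C" using len unfolding C_Tor_def by auto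
  then show "length x = 2*n \<and> map piE x \<in> C_Res C \<and> map ezE x \<in> C_Res C"
    using fr len x unfolding free_code_def C_Res_def by auto
next
  assume h: "length x = 2*n \<and> map piE x \<in> C_Res C \<and> map ezE x \<in> C_Res C"
  then obtain y where y: "y \<in> C" "map piE y = map piE x" unfolding C_Res_def by auto
  have ky: "map (\<lambda>a. Kap * a) y \<in> C" using lin y unfolding E_linear_code_def by auto
  have ly: "length y = length x" using y(2) by (metis length_map)
  have "map ezE x \<in> C_Tor n C" using h fr unfolding free_code_def by auto
  then have z: "map (\<lambda>b. bsc b Zet) (map ezE x) \<in> C" unfolding C_Tor_def by auto
  have "map2 (+) (map (\<lambda>a. Kap * a) y) (map (\<lambda>b. bsc b Zet) (map ezE x)) \<in> C"
    using lin ky z unfolding E_linear_code_def by auto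
  moreover have "map2 (+) (map (\<lambda>a. Kap * a) y) (map (\<lambda>b. bsc b Zet) (map ezE x)) = x"
  proof (rule nth_equalityI)
    fix i assume "i < length (map2 (+) (map (\<lambda>a. Kap * a) y) (map (\<lambda>b. bsc b Zet) (map ezE x)))"
    then have i: "i < length x" "i < length y" using ly by auto
    have "piE (y ! i) = piE (x ! i)" using y(2) i by (metis nth_map)
    then show "map2 (+) (map (\<lambda>a. Kap * a) y) (map (\<lambda>b. bsc b Zet) (map ezE x)) ! i = x ! i"
      using i by (simp add: times_E_bsc E_eq_iff piE_add ezE_add piE_bsc ezE_bsc)
  qed (simp add: ly)
  ultimately show "x \<in> C" by simp
qed


lemma kappa_nth: "j < length G \<Longrightarrow> i < length (G ! j) \<Longrightarrow> kappa_mat G ! j ! i = bsc (G ! j ! i) Kap"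
  by (simp add: kappa_mat_def)

lemma kappa_len[simp]: "length (kappa_mat G) = length G"
  by (simp add: kappa_mat_def)

lemma piE_bscK[simp]: "piE (bsc g Kap) = g" by (simp add: piE_bsc)
lemma ezE_bscK[simp]: "ezE (bsc g Kap) = 0" by (simp add: ezE_bsc)

lemma map_piE_spanE:
  assumes "\<forall>r\<in>set G. length r = 2*n"
  shows "map piE (map (\<lambda>i. \<Sum>j<length (kappa_mat G). e j * kappa_mat G ! j ! i) [0..<2*n])
       = map (\<lambda>i. \<Sum>j<length G. piE (e j) * G ! j ! i) [0..<2*n]"
proof -
  have "piE (\<Sum>j<length G. e j * kappa_mat G ! j ! i) = (\<Sum>j<length G. piE (e j) * G ! j ! i)"
    if i: "i < 2*n" for i
  proof -
    have "piE (\<Sum>j<length G. e j * kappa_mat G ! j ! i) = (\<Sum>j<length G. piE (e j * kappa_mat G ! j ! i))"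
      by (rule piE_sum)
    also have "\<dots> = (\<Sum>j<length G. piE (e j) * G ! j ! i)"
    proof (rule sum.cong)
      fix j assume "j \<in> {..<length G}"
      then have j: "j < length G" by simp
      then have "length (G ! j) = 2*n" using assms by auto
      then show "piE (e j * kappa_mat G ! j ! i) = piE (e j) * G ! j ! i"
        using i j by (simp add: kappa_nth piE_times)
    qed simp
    finally show ?thesis .
  qed
  then show ?thesis by simp
qed

lemma map_ezE_spanE:
  assumes "\<forall>r\<in>set G. length r = 2*n"
  shows "map ezE (map (\<lambda>i. \<Sum>j<length (kappa_mat G). e j * kappa_mat G ! j ! i) [0..<2*n])
       = map (\<lambda>i. \<Sum>j<length G. ezE (e j) * G ! j ! i) [0..<2*n]"
proof -
  have "ezE (\<Sum>j<length G. e j * kappa_mat G ! j ! i) = (\<Sum>j<length G. ezE (e j) * G ! j ! i)"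
    if i: "i < 2*n" for i
  proof -
    have "ezE (\<Sum>j<length G. e j * kappa_mat G ! j ! i) = (\<Sum>j<length G. ezE (e j * kappa_mat G ! j ! i))"
      by (rule ezE_sum)
    also have "\<dots> = (\<Sum>j<length G. ezE (e j) * G ! j ! i)"
    proof (rule sum.cong)
      fix j assume "j \<in> {..<length G}"
      then have j: "j < length G" by simp
      then have "length (G ! j) = 2*n" using assms by auto
      then show "ezE (e j * kappa_mat G ! j ! i) = ezE (e j) * G ! j ! i"
        using i j by (simp add: kappa_nth ezE_times)
    qed simp
    finally show ?thesis .
  qed
  then show ?thesis by simp
qed

lemma spanF2_sub:
  assumes "\<forall>r\<in>set G. length r = 2*n"
  shows "span_F2 n (kappa_mat G) \<subseteq> span_E n (kappa_mat G)"
proof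
  fix x assume "x \<in> span_F2 n (kappa_mat G)"
  then obtain u where x: "x = map (\<lambda>i. \<Sum>j<length (kappa_mat G). bsc (u j) (kappa_mat G ! j ! i)) [0..<2 * n]"
    unfolding span_F2_def by auto
  have "x = map (\<lambda>i. \<Sum>j<length (kappa_mat G). bsc (u j) Kap * kappa_mat G ! j ! i) [0..<2 * n]"
    unfolding x
  proof (rule map_cong[OF refl], rule sum.cong[OF refl])
    fix i j assume i: "i \<in> set [0..<2*n]" and j: "j \<in> {..<length (kappa_mat G)}"
    then have "length (G ! j) = 2*n" using assms by auto
    then have k: "kappa_mat G ! j ! i = bsc (G ! j ! i) Kap" using i j by (simp add: kappa_nth)
    show "bsc (u j) (kappa_mat G ! j ! i) = bsc (u j) Kap * kappa_mat G ! j ! i"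
      unfolding k using bit_cases2[of "u j"] bit_cases2[of "G ! j ! i"]
      by (auto simp: bsc_def times_E_def)
  qed
  then show "x \<in> span_E n (kappa_mat G)" unfolding span_E_def
    by (auto intro!: exI[of _ "\<lambda>j. bsc (u j) Kap"])
qed

lemma list_E_eq:
  assumes ly: "length y = length x" and a: "map piE y = map piE x" and b: "map ezE y = map ezE x"
  shows "y = x"
proof (rule nth_equalityI[OF ly])
  fix i assume "i < length y"
  then have i: "i < length y" "i < length x" using ly by auto
  have "piE (y ! i) = piE (x ! i)" using a i by (metis nth_map)
  moreover have "ezE (y ! i) = ezE (x ! i)" using b i by (metis nth_map)
  ultimately show "y ! i = x ! i" using E_eq_iff by blast
qed

lemma span_char:
  assumes G: "\<forall>r\<in>set G. length r = 2*n"
  shows "x \<in> span_E n (kappa_mat G) \<union> span_F2 n (kappa_mat G) \<longleftrightarrow>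
     length x = 2*n \<and> map piE x \<in> span_bin n G \<and> map ezE x \<in> span_bin n G"
proof
  assume "x \<in> span_E n (kappa_mat G) \<union> span_F2 n (kappa_mat G)"
  then have "x \<in> span_E n (kappa_mat G)" using spanF2_sub[OF G] by blast
  then obtain e where x: "x = map (\<lambda>i. \<Sum>j<length (kappa_mat G). e j * kappa_mat G ! j ! i) [0..<2 * n]"
    unfolding span_E_def by auto
  show "length x = 2*n \<and> map piE x \<in> span_bin n G \<and> map ezE x \<in> span_bin n G"
    unfolding x map_piE_spanE[OF G] map_ezE_spanE[OF G] span_bin_def by auto
next
  assume h: "length x = 2*n \<and> map piE x \<in> span_bin n G \<and> map ezE x \<in> span_bin n G"
  then obtain u v where u: "map piE x = map (\<lambda>i. \<Sum>j<length G. u j * G ! j ! i) [0..<2*n]"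
    and v: "map ezE x = map (\<lambda>i. \<Sum>j<length G. v j * G ! j ! i) [0..<2*n]"
    unfolding span_bin_def by auto
  define e where "e j = mkE (u j) (v j)" for j
  let ?y = "map (\<lambda>i. \<Sum>j<length (kappa_mat G). e j * kappa_mat G ! j ! i) [0..<2 * n]"
  have "map piE ?y = map piE x" unfolding map_piE_spanE[OF G] u by (simp add: e_def)
  moreover have "map ezE ?y = map ezE x" unfolding map_ezE_spanE[OF G] v by (simp add: e_def)
  ultimately have "?y = x" using list_E_eq h by simp
  then have "x \<in> span_E n (kappa_mat G)" unfolding span_E_def by (auto intro!: exI[of _ e])
  then show "x \<in> span_E n (kappa_mat G) \<union> span_F2 n (kappa_mat G)" by blast
qed

lemma SH_char:
  assumes lin: "E_linear_code n C" and fr: "free_code n C"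
  shows "x \<in> SHull n C \<longleftrightarrow> length x = 2*n \<and> map piE x \<in> SHull_bin n (C_Res C)
     \<and> map ezE x \<in> SHull_bin n (C_Res C)"
proof -
  have lenC: "\<And>w. w \<in> C \<Longrightarrow> length w = 2*n" using lin unfolding E_linear_code_def by auto
  have lenR: "\<And>r. r \<in> C_Res C \<Longrightarrow> length r = 2*n" using lenC unfolding C_Res_def by auto
  show ?thesis
  proof
    assume x: "x \<in> SHull n C"
    then have xC: "x \<in> C" and L: "\<forall>w\<in>C. symp n x w = 0"
      unfolding SHull_def perpS_def perpSL_def by auto
    have lx: "length x = 2*n" using lenC xC by auto
    have c: "map piE x \<in> C_Res C \<and> map ezE x \<in> C_Res C" using C_char[OF lin fr] xC by auto
    have "symp n (map piE x) r = 0 \<and> symp n (map ezE x) r = 0" if r: "r \<in> C_Res C" for r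
    proof -
      obtain w where w: "w \<in> C" "r = map piE w" using r unfolding C_Res_def by auto
      show ?thesis using L w symp_E_zero[OF lx lenC[OF w(1)]] by auto
    qed
    then show "length x = 2*n \<and> map piE x \<in> SHull_bin n (C_Res C) \<and> map ezE x \<in> SHull_bin n (C_Res C)"
      using c lx unfolding SHull_bin_def perpS_bin_def by auto
  next
    assume h: "length x = 2*n \<and> map piE x \<in> SHull_bin n (C_Res C) \<and> map ezE x \<in> SHull_bin n (C_Res C)"
    then have lx: "length x = 2*n" and a: "map piE x \<in> C_Res C" "\<forall>r\<in>C_Res C. symp n (map piE x) r = 0"
      and b: "map ezE x \<in> C_Res C" "\<forall>r\<in>C_Res C. symp n (map ezE x) r = 0"
      unfolding SHull_bin_def perpS_bin_def by auto
    have xC: "x \<in> C" using C_char[OF lin fr] lx a b by auto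
    have "symp n x w = 0 \<and> symp n w x = 0" if w: "w \<in> C" for w
    proof -
      have lw: "length w = 2*n" using lenC w by auto
      have pw: "map piE w \<in> C_Res C" "map ezE w \<in> C_Res C" using C_char[OF lin fr] w by auto
      have "symp n x w = 0" using symp_E_zero[OF lx lw] a b pw by auto
      moreover have "symp n w x = 0" using symp_E_zero[OF lw lx] a pw symp_bin_comm by metis
      ultimately show ?thesis by simp
    qed
    then show "x \<in> SHull n C" using xC lx unfolding SHull_def perpS_def perpSL_def perpSR_def by auto
  qed
qed

theorem mainTheorem2:
  fixes n :: nat and C :: "E list set" and G :: "bit list list"
  assumes "E_linear_code n C"
    and "free_code n C"
    and "gen_matrix_bin n G (SHull_bin n (C_Res C))"
  shows "gen_matrix_E n (kappa_mat G) (SHull n C)"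
proof -
  have G: "\<forall>r\<in>set G. length r = 2*n" and H: "SHull_bin n (C_Res C) = span_bin n G"
    using assms(3) unfolding gen_matrix_bin_def by auto
  have rows: "\<forall>r\<in>set (kappa_mat G). length r = 2*n" using G by (auto simp: kappa_mat_def)
  have "SHull n C = span_E n (kappa_mat G) \<union> span_F2 n (kappa_mat G)"
    using SH_char[OF assms(1,2)] span_char[OF G] H by blast
  then show ?thesis using rows unfolding gen_matrix_E_def by simp
qed

end
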